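(* Let $\mathcal{K}\subseteq\mathbb{R}\cup\{\pm\infty\}$ have nonzero Lebesgue measure, let $\varpi:\mathcal{K}\to\mathbb{R}_{\geq 0}$ be Lebesgue integrable with only countably many zeros, let $d,n,\rho\in\mathbb{N}$, let $\mathbf{f}\in\mathbb{L}^2_{\varpi}(\mathcal{K};\mathbb{R}^d)$ satisfy $\int_{\mathcal{K}}\varpi(\tau)\mathbf{f}(\tau)\mathbf{f}^\top(\tau)\,d\tau\succ 0$, put $F(\tau)=\mathbf{f}(\tau)\otimes I_n$, and let $U\in\mathbb{R}^{n\times n}$ be symmetric with $U\succeq 0$. Suppose there exist a symmetric $Y\in\mathbb{R}^{\rho dn\times\rho dn}$ and $X=[X_1\ \cdots\ X_d]\in\mathbb{R}^{n\times\rho dn}$ with $X_i\in\mathbb{R}^{n\times\rho n}$ such that $$\begin{bmatrix}U & -X\\ -X^\top & Y\end{bmatrix}\succeq 0 .$$ Put $\widehat{X}=\mathrm{Col}_{i=1}^d X_i\in\mathbb{R}^{dn\times\rho n}$ and $W=\int_{\mathcal{K}}\varpi(\tau)(\mathbf{f}^\top(\tau)\otimes I_{\rho n})Y(\mathbf{f}(\tau)\otimes I_{\rho n})\,d\tau$. Then $$\int_{\mathcal{K}}\varpi(\tau)\mathbf{x}^\top(\tau)U\mathbf{x}(\tau)\,d\tau\geq 2\boldsymbol{\vartheta}^\top\widehat{X}\mathbf{z}-\mathbf{z}^\top W\mathbf{z}$$ for all $\mathbf{z}\in\mathbb{R}^{\rho n}$ and $\mathbf{x}\in\mathbb{L}^2_{\varpi}(\mathcal{K};\mathbb{R}^n)$,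 where $\boldsymbol{\vartheta}=\int_{\mathcal{K}}\varpi(\tau)F(\tau)\mathbf{x}(\tau)\,d\tau$. Furthermore, if $\Upsilon\in\mathbb{R}^{dn\times\rho n}$ and $\mathbf{z}\in\mathbb{R}^{\rho n}$ satisfy $\Upsilon\mathbf{z}=\int_{\mathcal{K}}\varpi(\tau)F(\tau)\mathbf{x}(\tau)\,d\tau$, then $$\int_{\mathcal{K}}\varpi(\tau)\mathbf{x}^\top(\tau)U\mathbf{x}(\tau)\,d\tau\geq\mathbf{z}^\top\big[\Upsilon^\top\widehat{X}+\widehat{X}^\top\Upsilon-W\big]\mathbf{z}.$$
   Context: $\mathbb{L}^2_{\varpi}(\mathcal{K};\mathbb{R}^m)$ is the set of Lebesgue integrable functions $\phi:\mathcal{K}\to\mathbb{R}^m$ with $\int_{\mathcal{K}}\varpi\phi^\top\phi\,d\tau<\infty$. $\mathrm{Col}_{i=1}^d X_i$ is the vertical stack of the blocks $X_i$; $\otimes$ is the Kronecker product. *)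

theory Defs
  imports "HOL-Analysis.Analysis"
begin

text \<open>Matrices are represented as functions nat => nat => real with explicit
dimensions; vectors as nat => real.  Only entries with indices below the stated
dimensions are relevant.\<close>

type_synonym rmat = "nat \<Rightarrow> nat \<Rightarrow> real"
type_synonym rvec = "nat \<Rightarrow> real"

definition idm :: rmat where
  "idm i j = (if i = j then 1 else 0)"

definition colv :: "rvec \<Rightarrow> rmat" where "colv v i j = v i"
definition rowv :: "rvec \<Rightarrow> rmat" where "rowv v i j = v j"

definition mtrans :: "rmat \<Rightarrow> rmat" where "mtrans A i j = A j i"

definition kron :: "nat \<Rightarrow> nat \<Rightarrow> rmat \<Rightarrow> rmat \<Rightarrow> rmat" where
  "kron r s A B i j = A (i div r) (j div s) * B (i mod r) (j mod s)"

definition mmul :: "nat \<Rightarrow> rmat \<Rightarrow> rmat \<Rightarrow> rmat" where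
  "mmul k A B i j = (\<Sum>l<k. A i l * B l j)"

definition mvec :: "nat \<Rightarrow> rmat \<Rightarrow> rvec \<Rightarrow> rvec" where
  "mvec k A v i = (\<Sum>l<k. A i l * v l)"

definition qform :: "nat \<Rightarrow> rmat \<Rightarrow> rvec \<Rightarrow> real" where
  "qform k A v = (\<Sum>i<k. \<Sum>j<k. v i * A i j * v j)"

definition msym :: "nat \<Rightarrow> rmat \<Rightarrow> bool" where
  "msym k A \<longleftrightarrow> (\<forall>i<k. \<forall>j<k. A i j = A j i)"

definition psd :: "nat \<Rightarrow> rmat \<Rightarrow> bool" where
  "psd k A \<longleftrightarrow> msym k A \<and> (\<forall>v. qform k A v \<ge> 0)"

definition pd :: "nat \<Rightarrow> rmat \<Rightarrow> bool" where
  "pd k A \<longleftrightarrow> msym k A \<and> (\<forall>v. (\<exists>i<k. v i \<noteq> 0) \<longrightarrow> qform k A v > 0)"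

definition block_mat :: "nat \<Rightarrow> rmat \<Rightarrow> rmat \<Rightarrow> rmat \<Rightarrow> rmat" where
  "block_mat n U X Y i j =
     (if i < n \<and> j < n then U i j
      else if i < n then - X i (j - n)
      else if j < n then - X j (i - n)
      else Y (i - n) (j - n))"

text \<open>For X = [X_0 ... X_{d-1}] with X_i of size n x m: the block X_i.\<close>
definition hblock :: "nat \<Rightarrow> rmat \<Rightarrow> nat \<Rightarrow> rmat" where
  "hblock m X i p q = X p (i * m + q)"

definition colstack :: "nat \<Rightarrow> (nat \<Rightarrow> rmat) \<Rightarrow> rmat" where
  "colstack n Xs r q = Xs (r div n) (r mod n) q"

definition L2w :: "real set \<Rightarrow> (real \<Rightarrow> real) \<Rightarrow> nat \<Rightarrow> (real \<Rightarrow> rvec) \<Rightarrow> bool" where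
  "L2w K w m \<phi> \<longleftrightarrow>
     (\<forall>i<m. set_integrable lebesgue K (\<lambda>t. \<phi> t i)) \<and>
     set_integrable lebesgue K (\<lambda>t. w t * (\<Sum>i<m. (\<phi> t i)\<^sup>2))"

definition Fmat :: "nat \<Rightarrow> (real \<Rightarrow> rvec) \<Rightarrow> real \<Rightarrow> rmat" where
  "Fmat n f t = kron n n (colv (f t)) idm"

definition theta_vec :: "real set \<Rightarrow> (real \<Rightarrow> real) \<Rightarrow> nat \<Rightarrow> (real \<Rightarrow> rvec) \<Rightarrow> (real \<Rightarrow> rvec) \<Rightarrow> rvec" where
  "theta_vec K w n f x i = (LINT t:K|lebesgue. w t * mvec n (Fmat n f t) (x t) i)"

definition Xhat :: "nat \<Rightarrow> nat \<Rightarrow> rmat \<Rightarrow> rmat" where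
  "Xhat \<rho> n X = colstack n (hblock (\<rho> * n) X)"

definition Wmat :: "real set \<Rightarrow> (real \<Rightarrow> real) \<Rightarrow> nat \<Rightarrow> nat \<Rightarrow> nat \<Rightarrow> (real \<Rightarrow> rvec) \<Rightarrow> rmat \<Rightarrow> rmat" where
  "Wmat K w d n \<rho> f Y i j = (LINT t:K|lebesgue. w t *
      mmul (\<rho> * d * n)
        (mmul (\<rho> * d * n) (kron (\<rho> * n) (\<rho> * n) (rowv (f t)) idm) Y)
        (kron (\<rho> * n) (\<rho> * n) (colv (f t)) idm) i j)"

end

theory Submission
  imports Defs
begin
lemma shift_aux: fixes a k :: nat shows "(\<Sum>m\<in>{a..<a+k}. g m) = (\<Sum>q<k. (g (a+q)::real))"
proof (induction k)
  case 0 then show ?case by simp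
next
  case (Suc k)
  have e: "{a..<a+Suc k} = insert (a+k) {a..<a+k}" by auto
  have "(\<Sum>m\<in>{a..<a+Suc k}. g m) = g (a+k) + (\<Sum>m\<in>{a..<a+k}. g m)" unfolding e by (rule sum.insert) auto
  then show ?case using Suc by simp
qed

lemma sum_split_mult: "(\<Sum>m<d*k. g m) = ((\<Sum>i<d. \<Sum>q<k. g (i*k+q :: nat)) :: real)"
proof (induction d)
  case 0 then show ?case by simp
next
  case (Suc d)
  have "{..<Suc d * k} = {..<d*k} \<union> {d*k..<d*k+k}" by auto
  then have "(\<Sum>m<Suc d*k. g m) = (\<Sum>m<d*k. g m) + (\<Sum>m\<in>{d*k..<d*k+k}. g m)"
    by (simp add: sum.union_disjoint ivl_disj_int)
  also have "(\<Sum>m\<in>{d*k..<d*k+k}. g m) = (\<Sum>q<k. g (d*k+q))"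
    by (rule shift_aux)
  finally show ?case using Suc by simp
qed

lemma sum_split_add: "(\<Sum>m<n+N. g m) = ((\<Sum>i<n. g i) + (\<Sum>m<N. g (n+m :: nat)) :: real)"
proof -
  have "{..<n+N} = {..<n} \<union> {n..<n+N}" by auto
  then have "(\<Sum>m<n+N. g m) = (\<Sum>m<n. g m) + (\<Sum>m\<in>{n..<n+N}. g m)"
    by (simp add: sum.union_disjoint ivl_disj_int)
  also have "(\<Sum>m\<in>{n..<n+N}. g m) = (\<Sum>q<N. g (n+q))"
    by (rule shift_aux)
  finally show ?thesis .
qed

lemma sum_delta_idm: "a < k \<Longrightarrow> (\<Sum>i<k. z i * idm i a) = (z a::real)"
proof -
  assume "a < k"
  have "(\<Sum>i<k. z i * idm i a) = (\<Sum>i<k. if i = a then z a else 0)" by (rule sum.cong) (auto simp: idm_def)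
  then show ?thesis using \<open>a < k\<close> by simp
qed

lemma sum_delta_idm': "a < k \<Longrightarrow> (\<Sum>i<k. idm a i * z i) = (z a::real)"
proof -
  assume "a < k"
  have "(\<Sum>i<k. idm a i * z i) = (\<Sum>i<k. if a = i then z a else 0)" by (rule sum.cong) (auto simp: idm_def)
  then show ?thesis using \<open>a < k\<close> by simp
qed

lemma set_integrable_sum':
  fixes f :: "'i \<Rightarrow> 'a \<Rightarrow> real"
  shows "(\<And>i. i \<in> I \<Longrightarrow> set_integrable M A (f i)) \<Longrightarrow> set_integrable M A (\<lambda>x. \<Sum>i\<in>I. f i x)"
  unfolding set_integrable_def by (simp add: sum_distrib_left integrable_sum)

lemma set_integral_sum':
  fixes f :: "'i \<Rightarrow> 'a \<Rightarrow> real"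
  shows "(\<And>i. i \<in> I \<Longrightarrow> set_integrable M A (f i)) \<Longrightarrow> (LINT x:A|M. (\<Sum>i\<in>I. f i x)) = (\<Sum>i\<in>I. LINT x:A|M. f i x)"
  unfolding set_integrable_def set_lebesgue_integral_def by (simp add: sum_distrib_left integral_sum)


lemma abs_prod_le: "\<bar>a*b\<bar> \<le> a^2 + (b::real)^2"
proof -
  have "0 \<le> (\<bar>a\<bar>-\<bar>b\<bar>)^2" by simp
  also have "(\<bar>a\<bar>-\<bar>b\<bar>)^2 = a^2 - 2*(\<bar>a\<bar>*\<bar>b\<bar>) + b^2" by (simp add: power2_diff)
  finally have "2*(\<bar>a\<bar>*\<bar>b\<bar>) \<le> a^2 + b^2" by simp
  moreover have "0 \<le> \<bar>a\<bar>*\<bar>b\<bar>" by simp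
  ultimately show ?thesis unfolding abs_mult by linarith
qed

lemma prod_int:
  fixes w a b :: "real \<Rightarrow> real"
  assumes wm: "(\<lambda>t. indicator K t * w t) \<in> borel_measurable lebesgue"
  and w0: "\<forall>t\<in>K. w t \<ge> 0"
  and am: "(\<lambda>t. indicator K t * a t) \<in> borel_measurable lebesgue"
  and bm: "(\<lambda>t. indicator K t * b t) \<in> borel_measurable lebesgue"
  and ai: "set_integrable lebesgue K (\<lambda>t. w t * (a t)^2)"
  and bi: "set_integrable lebesgue K (\<lambda>t. w t * (b t)^2)"
  shows "set_integrable lebesgue K (\<lambda>t. w t * (a t * b t))"
proof -
  have m: "(\<lambda>t. indicator K t * (w t * (a t * b t))) = (\<lambda>t. (indicator K t * w t) * ((indicator K t * a t) * (indicator K t * b t)))"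
    by (auto simp: indicator_def)
  have meas: "(\<lambda>t. indicator K t * (w t * (a t * b t))) \<in> borel_measurable lebesgue"
    unfolding m by (rule borel_measurable_times[OF wm borel_measurable_times[OF am bm]])
  have s: "integrable lebesgue (\<lambda>t. indicator K t * (w t * (a t)^2) + indicator K t * (w t * (b t)^2))"
    using ai bi unfolding set_integrable_def by simp
  have "integrable lebesgue (\<lambda>t. indicator K t * (w t * (a t * b t)))"
  proof (rule Bochner_Integration.integrable_bound[OF s meas], rule AE_I2)
    fix t
    show "norm (indicator K t * (w t * (a t * b t))) \<le> norm (indicator K t * (w t * (a t)^2) + indicator K t * (w t * (b t)^2))"
    proof (cases "t \<in> K")
      case True
      then have "w t \<ge> 0" using w0 by auto
      then have "\<bar>w t * (a t * b t)\<bar> \<le> w t * ((a t)^2 + (b t)^2)"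
        using abs_prod_le[of "a t" "b t"] by (simp add: abs_mult mult_left_mono)
      also have "\<dots> \<le> \<bar>w t * (a t)^2 + w t * (b t)^2\<bar>" by (simp add: distrib_left)
      finally show ?thesis using True by simp
    qed simp
  qed
  then show ?thesis unfolding set_integrable_def by simp
qed

lemma L2w_comp:
  assumes L: "L2w K w m \<phi>" and i: "i < m"
  and wm: "(\<lambda>t. indicator K t * w t) \<in> borel_measurable lebesgue"
  and w0: "\<forall>t\<in>K. w t \<ge> 0"
  shows "(\<lambda>t. indicator K t * \<phi> t i) \<in> borel_measurable lebesgue"
    and "set_integrable lebesgue K (\<lambda>t. w t * (\<phi> t i)^2)"
proof -
  have "set_integrable lebesgue K (\<lambda>t. \<phi> t i)" using L i unfolding L2w_def by auto
  then show am: "(\<lambda>t. indicator K t * \<phi> t i) \<in> borel_measurable lebesgue"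
    unfolding set_integrable_def by (simp add: borel_measurable_integrable)
  have s: "integrable lebesgue (\<lambda>t. indicator K t * (w t * (\<Sum>i<m. (\<phi> t i)\<^sup>2)))"
    using L unfolding L2w_def set_integrable_def by simp
  have m: "(\<lambda>t. indicator K t * (w t * (\<phi> t i)^2)) = (\<lambda>t. (indicator K t * w t) * ((indicator K t * \<phi> t i) * (indicator K t * \<phi> t i)))"
    by (auto simp: indicator_def power2_eq_square)
  have meas: "(\<lambda>t. indicator K t * (w t * (\<phi> t i)^2)) \<in> borel_measurable lebesgue"
    unfolding m by (rule borel_measurable_times[OF wm borel_measurable_times[OF am am]])
  have "integrable lebesgue (\<lambda>t. indicator K t * (w t * (\<phi> t i)^2))"
  proof (rule Bochner_Integration.integrable_bound[OF s meas], rule AE_I2)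
    fix t
    show "norm (indicator K t * (w t * (\<phi> t i)^2)) \<le> norm (indicator K t * (w t * (\<Sum>i<m. (\<phi> t i)\<^sup>2)))"
    proof (cases "t \<in> K")
      case True
      then have w: "w t \<ge> 0" using w0 by auto
      have "(\<phi> t i)^2 \<le> (\<Sum>i<m. (\<phi> t i)\<^sup>2)"
        using i by (intro member_le_sum) auto
      then have "w t * (\<phi> t i)^2 \<le> w t * (\<Sum>i<m. (\<phi> t i)\<^sup>2)" using w by (rule mult_left_mono)
      moreover have "0 \<le> w t * (\<phi> t i)^2" using w by simp
      ultimately show ?thesis using True by simp
    qed simp
  qed
  then show "set_integrable lebesgue K (\<lambda>t. w t * (\<phi> t i)^2)" unfolding set_integrable_def by simp
qed


lemma lmi_point:
  fixes a b :: rvec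
  assumes P: "psd (n+N) (block_mat n U X Y)"
  shows "qform n U a - 2 * (\<Sum>p<n. \<Sum>m<N. a p * X p m * b m) + qform N Y b \<ge> 0"
proof -
  define v where "v i = (if i < n then a i else b (i-n))" for i
  have "qform (n+N) (block_mat n U X Y) v \<ge> 0" using P unfolding psd_def by auto
  also have "qform (n+N) (block_mat n U X Y) v =
     (\<Sum>i<n. (\<Sum>j<n. a i * U i j * a j) + (\<Sum>m<N. a i * (- X i m) * b m))
     + (\<Sum>l<N. (\<Sum>j<n. b l * (- X j l) * a j) + (\<Sum>m<N. b l * Y l m * b m))"
    unfolding qform_def sum_split_add by (simp add: v_def block_mat_def)
  also have "(\<Sum>l<N. (\<Sum>j<n. b l * (- X j l) * a j)) = - (\<Sum>p<n. \<Sum>m<N. a p * X p m * b m)"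
    by (subst sum.swap) (simp add: sum_negf mult_ac)
  ultimately show ?thesis
    by (simp add: sum.distrib qform_def sum_negf sum_subtractf)
qed


lemma swap_in3: "(\<Sum>j\<in>B. \<Sum>l\<in>C. \<Sum>m\<in>D. G j l m) = (\<Sum>l\<in>C. \<Sum>m\<in>D. \<Sum>j\<in>B. (G j l m::real))"
proof -
  have "(\<Sum>j\<in>B. \<Sum>l\<in>C. \<Sum>m\<in>D. G j l m) = (\<Sum>l\<in>C. \<Sum>j\<in>B. \<Sum>m\<in>D. G j l m)" by (rule sum.swap)
  also have "\<dots> = (\<Sum>l\<in>C. \<Sum>m\<in>D. \<Sum>j\<in>B. G j l m)" by (rule sum.cong[OF refl], rule sum.swap)
  finally show ?thesis .
qed

lemma swap4: "(\<Sum>i\<in>A. \<Sum>j\<in>B. \<Sum>l\<in>C. \<Sum>m\<in>D. G i j l m) = (\<Sum>l\<in>C. \<Sum>m\<in>D. \<Sum>i\<in>A. \<Sum>j\<in>B. (G i j l m::real))"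
proof -
  have "(\<Sum>i\<in>A. \<Sum>j\<in>B. \<Sum>l\<in>C. \<Sum>m\<in>D. G i j l m) = (\<Sum>i\<in>A. \<Sum>l\<in>C. \<Sum>m\<in>D. \<Sum>j\<in>B. G i j l m)"
    by (rule sum.cong[OF refl], rule swap_in3)
  also have "\<dots> = (\<Sum>l\<in>C. \<Sum>m\<in>D. \<Sum>i\<in>A. \<Sum>j\<in>B. G i j l m)" by (rule swap_in3)
  finally show ?thesis .
qed

lemma mvec_F: "r < d*n \<Longrightarrow> mvec n (Fmat n f t) v r = f t (r div n) * v (r mod n)"
proof -
  assume r: "r < d*n"
  then have n: "n > 0" by (cases n) auto
  have "mvec n (Fmat n f t) v r = (\<Sum>l<n. f t (r div n) * (idm (r mod n) l * v l))"
    unfolding mvec_def Fmat_def kron_def colv_def by (rule sum.cong) (auto simp: mult_ac)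
  also have "\<dots> = f t (r div n) * (\<Sum>l<n. idm (r mod n) l * v l)" by (simp add: sum_distrib_left)
  also have "\<dots> = f t (r div n) * v (r mod n)" using n by (simp add: sum_delta_idm')
  finally show ?thesis .
qed

lemma Xhat_e: "p < n \<Longrightarrow> Xhat \<rho> n X (i*n+p) q = X p (i*(\<rho>*n)+q)"
  by (simp add: Xhat_def colstack_def hblock_def)

lemma divmod_aux: "q < (k::nat) \<Longrightarrow> (i*k+q) div k = i" "q < (k::nat) \<Longrightarrow> (i*k+q) mod k = q"
  by auto

lemma P1:
  "(\<Sum>p<n. \<Sum>m<d*(\<rho>*n). xv p * X p m * (f t (m div (\<rho>*n)) * z (m mod (\<rho>*n))))
   = (\<Sum>r<d*n. mvec n (Fmat n f t) xv r * mvec (\<rho>*n) (Xhat \<rho> n X) z r)"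
proof -
  let ?k = "\<rho>*n"
  have "(\<Sum>r<d*n. mvec n (Fmat n f t) xv r * mvec ?k (Xhat \<rho> n X) z r)
     = (\<Sum>i<d. \<Sum>p<n. mvec n (Fmat n f t) xv (i*n+p) * mvec ?k (Xhat \<rho> n X) z (i*n+p))"
    by (rule sum_split_mult)
  also have "\<dots> = (\<Sum>i<d. \<Sum>p<n. (f t i * xv p) * (\<Sum>q<?k. X p (i*?k+q) * z q))"
  proof (intro sum.cong refl)
    fix i p assume i: "i \<in> {..<d}" and p: "p \<in> {..<n}"
    have "i*n+p < (i+1)*n" using p by simp
    also have "(i+1)*n \<le> d*n" using i by (intro mult_right_mono) auto
    finally have "i*n+p < d*n" .
    show "mvec n (Fmat n f t) xv (i*n+p) * mvec ?k (Xhat \<rho> n X) z (i*n+p)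
       = (f t i * xv p) * (\<Sum>q<?k. X p (i*?k+q) * z q)"
    proof -
      have mF: "mvec n (Fmat n f t) xv (i*n+p) = f t i * xv p" using mvec_F[OF \<open>i*n+p < d*n\<close>] p by simp
      have mX: "mvec ?k (Xhat \<rho> n X) z (i*n+p) = (\<Sum>q<?k. X p (i*?k+q) * z q)" using p by (simp add: mvec_def Xhat_e)
      show ?thesis by (simp only: mF mX)
    qed
  qed
  also have "\<dots> = (\<Sum>p<n. \<Sum>i<d. \<Sum>q<?k. xv p * X p (i*?k+q) * (f t i * z q))"
    by (subst sum.swap) (simp add: sum_distrib_left mult_ac)
  also have "\<dots> = (\<Sum>p<n. \<Sum>m<d*?k. xv p * X p m * (f t (m div ?k) * z (m mod ?k)))"
  proof (rule sum.cong[OF refl])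
    fix p
    show "(\<Sum>i<d. \<Sum>q<?k. xv p * X p (i*?k+q) * (f t i * z q)) = (\<Sum>m<d*?k. xv p * X p m * (f t (m div ?k) * z (m mod ?k)))"
      unfolding sum_split_mult[where d=d and k="?k" and g="\<lambda>m. xv p * X p m * (f t (m div ?k) * z (m mod ?k))"]
    proof (intro sum.cong refl)
      fix i q assume "q \<in> {..<?k}"
      then have q: "q < ?k" by simp
      show "xv p * X p (i*?k+q) * (f t i * z q) = xv p * X p (i*?k+q) * (f t ((i*?k+q) div ?k) * z ((i*?k+q) mod ?k))"
        by (simp only: divmod_aux[OF q])
    qed
  qed
  finally show ?thesis by simp
qed


lemma P2:
  assumes N0: "k = 0 \<Longrightarrow> N = 0"
  shows "(\<Sum>i<k. \<Sum>j<k. z i * mmul N (mmul N (kron k k (rowv fv) idm) Y) (kron k k (colv fv) idm) i j * z j)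
   = qform N Y (\<lambda>m. fv (m div k) * z (m mod k))"
proof (cases "k = 0")
  case True
  then show ?thesis using N0 unfolding qform_def by simp
next
  case False
  then have k: "k > 0" by simp
  let ?M = "mmul N (mmul N (kron k k (rowv fv) idm) Y) (kron k k (colv fv) idm)"
  let ?K = "\<lambda>l m. fv (m div k) * Y m l * fv (l div k)"
  have a: "?M i j = (\<Sum>l<N. \<Sum>m<N. (idm i (m mod k)) * ?K l m * idm (l mod k) j)" if "i < k" "j < k" for i j
    unfolding mmul_def kron_def rowv_def colv_def using that
    by (simp add: sum_distrib_right sum_distrib_left mult_ac)
  have "(\<Sum>i<k. \<Sum>j<k. z i * ?M i j * z j)
     = (\<Sum>i<k. \<Sum>j<k. \<Sum>l<N. \<Sum>m<N. (z i * idm i (m mod k)) * (?K l m * (idm (l mod k) j * z j)))"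
    by (intro sum.cong refl) (simp add: a sum_distrib_left sum_distrib_right mult_ac)
  also have "\<dots> = (\<Sum>l<N. \<Sum>m<N. \<Sum>i<k. \<Sum>j<k. (z i * idm i (m mod k)) * (?K l m * (idm (l mod k) j * z j)))"
    by (rule swap4)
  also have "\<dots> = (\<Sum>l<N. \<Sum>m<N. z (m mod k) * ?K l m * z (l mod k))"
  proof (intro sum.cong refl)
    fix l m
    have "(\<Sum>i<k. \<Sum>j<k. (z i * idm i (m mod k)) * (?K l m * (idm (l mod k) j * z j)))
      = (\<Sum>i<k. z i * idm i (m mod k)) * (?K l m * (\<Sum>j<k. idm (l mod k) j * z j))"
      by (simp only: sum_distrib_left[of "?K l m"] sum_product)
    also have "\<dots> = z (m mod k) * ?K l m * z (l mod k)"
      using k by (simp add: sum_delta_idm sum_delta_idm')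
    finally show "(\<Sum>i<k. \<Sum>j<k. (z i * idm i (m mod k)) * (?K l m * (idm (l mod k) j * z j))) = z (m mod k) * ?K l m * z (l mod k)" .
  qed
  also have "\<dots> = qform N Y (\<lambda>m. fv (m div k) * z (m mod k))"
    unfolding qform_def by (subst sum.swap) (simp add: mult_ac)
  finally show ?thesis .
qed


lemma qmm: "qform k (mmul D (mtrans A) B) z = (\<Sum>r<D. mvec k A z r * mvec k B z r)"
proof -
  have "qform k (mmul D (mtrans A) B) z = (\<Sum>i<k. \<Sum>j<k. \<Sum>r<D. (z i * A r i) * (B r j * z j))"
    unfolding qform_def mmul_def mtrans_def by (simp add: sum_distrib_left sum_distrib_right mult_ac)
  also have "\<dots> = (\<Sum>r<D. \<Sum>i<k. \<Sum>j<k. (z i * A r i) * (B r j * z j))"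
    by (rule swap_in3[symmetric])
  also have "\<dots> = (\<Sum>r<D. mvec k A z r * mvec k B z r)"
    unfolding mvec_def by (simp add: sum_product mult_ac)
  finally show ?thesis .
qed

lemma qform_add_diff: "qform k (\<lambda>i j. A i j + B i j - C i j) z = qform k A z + qform k B z - qform k C z"
  unfolding qform_def by (simp add: algebra_simps sum.distrib sum_subtractf)


theorem theorem2:
  fixes K :: "real set" and w :: "real \<Rightarrow> real" and d n \<rho> :: nat
    and f :: "real \<Rightarrow> rvec" and U Y X :: rmat
  assumes K_meas: "K \<in> sets lebesgue" and K_pos: "emeasure lebesgue K \<noteq> 0"
    and w_nonneg: "\<forall>t\<in>K. w t \<ge> 0"
    and w_int: "set_integrable lebesgue K w"
    and w_zeros: "countable {t\<in>K. w t = 0}"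
    and f_L2: "L2w K w d f"
    and f_pd: "pd d (\<lambda>k l. LINT t:K|lebesgue. w t * (f t k * f t l))"
    and U_psd: "psd n U"
    and Y_sym: "msym (\<rho> * d * n) Y"
    and LMI: "psd (n + \<rho> * d * n) (block_mat n U X Y)"
  shows
    "(\<forall>z x. L2w K w n x \<longrightarrow>
        (LINT t:K|lebesgue. w t * qform n U (x t))
          \<ge> 2 * (\<Sum>i<d * n. theta_vec K w n f x i * mvec (\<rho> * n) (Xhat \<rho> n X) z i)
             - qform (\<rho> * n) (Wmat K w d n \<rho> f Y) z)
   \<and> (\<forall>\<Upsilon> z x. L2w K w n x \<longrightarrow>
        (\<forall>i<d * n. mvec (\<rho> * n) \<Upsilon> z i = theta_vec K w n f x i) \<longrightarrow>
        (LINT t:K|lebesgue. w t * qform n U (x t))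
          \<ge> qform (\<rho> * n)
               (\<lambda>i j. mmul (d * n) (mtrans \<Upsilon>) (Xhat \<rho> n X) i j
                     + mmul (d * n) (mtrans (Xhat \<rho> n X)) \<Upsilon> i j
                     - Wmat K w d n \<rho> f Y i j) z)"
proof -
  define k where "k = \<rho> * n"
  define N where "N = \<rho> * d * n"
  have Nk: "N = d * k" unfolding N_def k_def by simp
  have wm: "(\<lambda>t. indicator K t * w t) \<in> borel_measurable lebesgue"
    using w_int unfolding set_integrable_def by (simp add: borel_measurable_integrable)
  have fc: "(\<lambda>t. indicator K t * f t a) \<in> borel_measurable lebesgue"
           "set_integrable lebesgue K (\<lambda>t. w t * (f t a)^2)" if "a < d" for a
    using L2w_comp[OF f_L2 that wm w_nonneg] by auto
  have int_ff: "set_integrable lebesgue K (\<lambda>t. w t * (f t a * f t b))" if "a < d" "b < d" for a b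
    using prod_int[OF wm w_nonneg fc(1)[OF that(1)] fc(1)[OF that(2)] fc(2)[OF that(1)] fc(2)[OF that(2)]] .
  let ?M = "\<lambda>t. mmul N (mmul N (kron k k (rowv (f t)) idm) Y) (kron k k (colv (f t)) idm)"
  have Weq: "w t * ?M t i j = (\<Sum>l<N. \<Sum>m<N. (idm (i mod k) (m mod k) * Y m l * idm (l mod k) (j mod k))
            * (w t * (f t (m div k) * f t (l div k))))" for t i j
    unfolding mmul_def kron_def rowv_def colv_def by (simp add: sum_distrib_left sum_distrib_right mult_ac)
  have divk: "m div k < d" if "m < N" for m
    using that unfolding Nk by (metis less_mult_imp_div_less mult.commute)
  have Wint: "set_integrable lebesgue K (\<lambda>t. w t * ?M t i j)" for i j
    unfolding Weq
    by (intro set_integrable_sum' set_integrable_mult_right int_ff divk) auto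
  have Wm: "Wmat K w d n \<rho> f Y i j = (LINT t:K|lebesgue. w t * ?M t i j)" for i j
    unfolding Wmat_def k_def N_def by simp
  have part1: "(LINT t:K|lebesgue. w t * qform n U (x t))
          \<ge> 2 * (\<Sum>i<d * n. theta_vec K w n f x i * mvec (\<rho> * n) (Xhat \<rho> n X) z i)
             - qform (\<rho> * n) (Wmat K w d n \<rho> f Y) z" if Lx: "L2w K w n x" for z x
  proof -
    have xc: "(\<lambda>t. indicator K t * x t a) \<in> borel_measurable lebesgue"
           "set_integrable lebesgue K (\<lambda>t. w t * (x t a)^2)" if "a < n" for a
      using L2w_comp[OF Lx that wm w_nonneg] by auto
    have int_xx: "set_integrable lebesgue K (\<lambda>t. w t * (x t a * x t b))" if "a < n" "b < n" for a b
      using prod_int[OF wm w_nonneg xc(1)[OF that(1)] xc(1)[OF that(2)] xc(2)[OF that(1)] xc(2)[OF that(2)]] .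
    have int_fx: "set_integrable lebesgue K (\<lambda>t. w t * (f t a * x t b))" if "a < d" "b < n" for a b
      using prod_int[OF wm w_nonneg fc(1)[OF that(1)] xc(1)[OF that(2)] fc(2)[OF that(1)] xc(2)[OF that(2)]] .
    have Teq: "w t * mvec n (Fmat n f t) (x t) r = w t * (f t (r div n) * x t (r mod n))" if "r < d*n" for t r
      using mvec_F[OF that] by simp
    have Tint: "set_integrable lebesgue K (\<lambda>t. w t * mvec n (Fmat n f t) (x t) r)" if r: "r < d*n" for r
    proof -
      have n: "n > 0" using r by (cases n) auto
      have "r div n < d" using r by (metis less_mult_imp_div_less)
      then show ?thesis unfolding Teq[OF r] using n by (intro int_fx) auto
    qed
    have Ueq: "w t * qform n U (x t) = (\<Sum>i<n. \<Sum>j<n. U i j * (w t * (x t i * x t j)))" for t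
      unfolding qform_def by (simp add: sum_distrib_left mult_ac)
    have Uint: "set_integrable lebesgue K (\<lambda>t. w t * qform n U (x t))"
      unfolding Ueq by (intro set_integrable_sum' set_integrable_mult_right int_xx) auto
    define c where "c r = mvec k (Xhat \<rho> n X) z r" for r
    define b where "b t m = f t (m div k) * z (m mod k)" for t m
    define g where "g t = 2 * (\<Sum>r<d*n. (w t * mvec n (Fmat n f t) (x t) r) * c r)
        - (\<Sum>i<k. \<Sum>j<k. z i * (w t * ?M t i j) * z j)" for t
    have gint: "set_integrable lebesgue K g"
      unfolding g_def
      by (intro set_integral_diff(1) set_integrable_mult_right set_integrable_sum' set_integrable_mult_left Tint Wint) auto
    have gI: "(LINT t:K|lebesgue. g t) = 2 * (\<Sum>r<d*n. theta_vec K w n f x r * c r) - qform k (Wmat K w d n \<rho> f Y) z"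
    proof -
      have i1: "set_integrable lebesgue K (\<lambda>t. 2 * (\<Sum>r<d*n. (w t * mvec n (Fmat n f t) (x t) r) * c r))"
        by (intro set_integrable_mult_right set_integrable_sum' set_integrable_mult_left Tint) auto
      have i2: "set_integrable lebesgue K (\<lambda>t. \<Sum>i<k. \<Sum>j<k. z i * (w t * ?M t i j) * z j)"
        by (intro set_integrable_sum' set_integrable_mult_right set_integrable_mult_left Wint)
      have "(LINT t:K|lebesgue. g t) = (LINT t:K|lebesgue. 2 * (\<Sum>r<d*n. (w t * mvec n (Fmat n f t) (x t) r) * c r))
           - (LINT t:K|lebesgue. \<Sum>i<k. \<Sum>j<k. z i * (w t * ?M t i j) * z j)"
        unfolding g_def by (rule set_integral_diff(2)[OF i1 i2])
      also have "(LINT t:K|lebesgue. 2 * (\<Sum>r<d*n. (w t * mvec n (Fmat n f t) (x t) r) * c r))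
          = 2 * (\<Sum>r<d*n. theta_vec K w n f x r * c r)"
        unfolding set_integral_mult_right theta_vec_def
        by (subst set_integral_sum'; auto intro!: set_integrable_mult_left Tint)
      also have "(LINT t:K|lebesgue. \<Sum>i<k. \<Sum>j<k. z i * (w t * ?M t i j) * z j) = qform k (Wmat K w d n \<rho> f Y) z"
        unfolding qform_def Wm
        apply (subst set_integral_sum')
         apply (intro set_integrable_sum' set_integrable_mult_right set_integrable_mult_left Wint; simp)
        apply (rule sum.cong[OF refl])
        apply (subst set_integral_sum')
         apply (intro set_integrable_mult_right set_integrable_mult_left Wint; simp)
        by simp
      finally show ?thesis .
    qed
    have pt: "w t * qform n U (x t) \<ge> g t" if t: "t \<in> K" for t
    proof -
      have l: "qform n U (x t) - 2 * (\<Sum>p<n. \<Sum>m<N. x t p * X p m * b t m) + qform N Y (b t) \<ge> 0"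
        using lmi_point[OF LMI[folded N_def]] .
      have p1: "(\<Sum>p<n. \<Sum>m<N. x t p * X p m * b t m) = (\<Sum>r<d*n. mvec n (Fmat n f t) (x t) r * c r)"
        unfolding b_def c_def Nk k_def by (rule P1)
      have p2: "(\<Sum>i<k. \<Sum>j<k. z i * ?M t i j * z j) = qform N Y (b t)"
        unfolding b_def by (rule P2) (simp add: Nk)
      have g': "g t = w t * (2 * (\<Sum>r<d*n. mvec n (Fmat n f t) (x t) r * c r) - (\<Sum>i<k. \<Sum>j<k. z i * ?M t i j * z j))"
        unfolding g_def by (simp add: sum_distrib_left right_diff_distrib mult_ac)
      have "0 \<le> w t" using w_nonneg t by auto
      then have "w t * (2 * (\<Sum>r<d*n. mvec n (Fmat n f t) (x t) r * c r) - (\<Sum>i<k. \<Sum>j<k. z i * ?M t i j * z j)) \<le> w t * qform n U (x t)"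
        using l unfolding p1 p2 by (intro mult_left_mono) auto
      then show ?thesis unfolding g' .
    qed
    have "(LINT t:K|lebesgue. g t) \<le> (LINT t:K|lebesgue. w t * qform n U (x t))"
      by (rule set_integral_mono[OF gint Uint pt])
    then show ?thesis unfolding gI c_def k_def by simp
  qed
  show ?thesis
  proof (intro conjI allI impI)
    fix z x assume "L2w K w n x"
    then show "(LINT t:K|lebesgue. w t * qform n U (x t))
          \<ge> 2 * (\<Sum>i<d * n. theta_vec K w n f x i * mvec (\<rho> * n) (Xhat \<rho> n X) z i)
             - qform (\<rho> * n) (Wmat K w d n \<rho> f Y) z" by (rule part1)
  next
    fix \<Upsilon> z x assume Lx: "L2w K w n x" and eq: "\<forall>i<d * n. mvec (\<rho> * n) \<Upsilon> z i = theta_vec K w n f x i"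
    have "qform (\<rho> * n)
               (\<lambda>i j. mmul (d * n) (mtrans \<Upsilon>) (Xhat \<rho> n X) i j
                     + mmul (d * n) (mtrans (Xhat \<rho> n X)) \<Upsilon> i j
                     - Wmat K w d n \<rho> f Y i j) z
        = 2 * (\<Sum>i<d * n. theta_vec K w n f x i * mvec (\<rho> * n) (Xhat \<rho> n X) z i)
             - qform (\<rho> * n) (Wmat K w d n \<rho> f Y) z"
      unfolding qform_add_diff qmm using eq by (simp add: mult.commute sum.distrib[symmetric] sum_distrib_left)
    then show "(LINT t:K|lebesgue. w t * qform n U (x t))
          \<ge> qform (\<rho> * n)
               (\<lambda>i j. mmul (d * n) (mtrans \<Upsilon>) (Xhat \<rho> n X) i j
                     + mmul (d * n) (mtrans (Xhat \<rho> n X)) \<Upsilon> i j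
                     - Wmat K w d n \<rho> f Y i j) z" using part1[OF Lx, of z] by simp
  qed
qed

end
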